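(* For every $l\ge1$ and every positive integer $K$, $$\limsup_{n\to\infty} f(n)^{1/n}\le c_{l,K}\cdot 2^{\eta_{l,K}},$$ where $$c_{l,K}=\prod_{i=1}^K r_l(i)^{\frac{2}{i(i+1)}\prod_{j=1}^l(1-1/p_j)},\qquad \eta_{l,K}=2-\sum_{i=1}^K\frac{2}{i(i+1)}\prod_{j=1}^l\left(1-\frac1{p_j}\right)|M_l(i)|.$$
   Context: A set of positive integers is primitive if no element divides another. $f(n)$ is the number of $n$-element primitive subsets of $\{1,\dots,2n\}$. Let $p_1<p_2<\dots$ be the primes. $M_l$ is the set of positive integers all of whose prime factors lie in $\{p_1,\dots,p_l\}$, $M_l(x)=\{m\in M_l:m\le x\}$ ordered by divisibility, and $r_l(i)$ denotes the total number of maximum-size antichains of $M_l(i)$. *)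

theory Defs
  imports "HOL-Analysis.Analysis" "HOL-Computational_Algebra.Primes"
begin

definition primitive :: "nat set \<Rightarrow> bool" where
  "primitive A \<longleftrightarrow> (\<forall>a\<in>A. \<forall>b\<in>A. a dvd b \<longrightarrow> a = b)"

definition fprim :: "nat \<Rightarrow> nat" where
  "fprim n = card {A. A \<subseteq> {1..2*n} \<and> card A = n \<and> primitive A}"

text \<open>p j: the j-th prime, 1-indexed (p 1 = 2).\<close>
definition pr :: "nat \<Rightarrow> nat" where
  "pr j = enumerate {q::nat. prime q} (j - 1)"

definition Ml :: "nat \<Rightarrow> nat \<Rightarrow> nat set" where
  "Ml l x = {m. 1 \<le> m \<and> m \<le> x \<and> (\<forall>q. prime q \<and> q dvd m \<longrightarrow> q \<in> pr ` {1..l})}"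

definition width :: "nat \<Rightarrow> nat \<Rightarrow> nat" where
  "width l x = Max {card A | A. A \<subseteq> Ml l x \<and> primitive A}"

definition rl :: "nat \<Rightarrow> nat \<Rightarrow> nat" where
  "rl l i = card {A. A \<subseteq> Ml l i \<and> primitive A \<and> card A = width l i}"

definition cLK :: "nat \<Rightarrow> nat \<Rightarrow> real" where
  "cLK l K = (\<Prod>i=1..K. real (rl l i) powr
      (2 / (real i * (real i + 1)) * (\<Prod>j=1..l. 1 - 1 / real (pr j))))"

definition etaLK :: "nat \<Rightarrow> nat \<Rightarrow> real" where
  "etaLK l K = 2 - (\<Sum>i=1..K. 2 / (real i * (real i + 1)) *
      (\<Prod>j=1..l. 1 - 1 / real (pr j)) * real (card (Ml l i)))"

end

theory Submission imports Defs "HOL-Number_Theory.Number_Theory"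
begin

lemma pr_prime: "prime (pr j)"
  using enumerate_in_set[of "{q::nat. prime q}"] primes_infinite unfolding pr_def by auto

lemma pr_1: "pr 1 = 2"
proof -
  have "(LEAST n::nat. prime n) = 2"
    by (rule Least_equality) (auto simp: prime_ge_2_nat)
  thus ?thesis unfolding pr_def by (simp add: enumerate_0)
qed

lemma pr_inj: "inj_on pr {1..l}"
proof (rule inj_onI)
  fix a b assume ab: "a \<in> {1..l}" "b \<in> {1..l}" "pr a = pr b"
  have "strict_mono (enumerate {q::nat. prime q})"
    by (rule strict_mono_enumerate) (use primes_infinite in auto)
  hence "inj (enumerate {q::nat. prime q})" by (rule strict_mono_imp_inj_on)
  hence "a - 1 = b - 1" using ab(3) unfolding pr_def by (auto dest: injD)
  thus "a = b" using ab by auto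
qed

definition PP :: "nat \<Rightarrow> nat" where "PP l = (\<Prod>j=1..l. pr j)"

lemma PP_pos: "PP l > 0"
  unfolding PP_def using pr_prime by (simp add: prime_gt_0_nat)

lemma coprime_PP: "coprime m (PP l) \<longleftrightarrow> (\<forall>j\<in>{1..l}. coprime m (pr j))"
proof
  assume h: "coprime m (PP l)"
  show "\<forall>j\<in>{1..l}. coprime m (pr j)"
  proof
    fix j assume "j \<in> {1..l}"
    hence "pr j dvd PP l" unfolding PP_def by (intro dvd_prodI) auto
    thus "coprime m (pr j)" using h coprime_imp_coprime by (metis dvd_trans dvd_refl)
  qed
next
  assume "\<forall>j\<in>{1..l}. coprime m (pr j)"
  thus "coprime m (PP l)" unfolding PP_def by (intro prod_coprime_right) auto
qed

lemma totient_PP: "totient (PP l) = (\<Prod>j=1..l. pr j - 1)"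
proof -
  have "totient (PP l) = (\<Prod>j=1..l. totient (pr j))"
    unfolding PP_def
  proof (rule totient_prod_coprime)
    show "pairwise coprime (pr ` {1..l})"
      unfolding pairwise_def using pr_prime
      by (auto simp: primes_coprime)
    show "inj_on pr {1..l}" by (rule pr_inj)
  qed
  thus ?thesis using pr_prime by (simp add: totient_prime)
qed

lemma delta_eq: "(\<Prod>j=1..l. 1 - 1 / real (pr j)) = real (totient (PP l)) / real (PP l)"
proof -
  have "(\<Prod>j=1..l. 1 - 1 / real (pr j)) = (\<Prod>j=1..l. real (pr j - 1) / real (pr j))"
  proof (rule prod.cong)
    fix j have "pr j \<ge> 1" using pr_prime[of j] prime_gt_0_nat[of "pr j"] by linarith
    moreover have "real (pr j) > 0" using pr_prime[of j] by (simp add: prime_gt_0_nat)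
    ultimately show "1 - 1 / real (pr j) = real (pr j - 1) / real (pr j)"
      by (simp add: of_nat_diff field_simps)
  qed simp
  also have "\<dots> = real (totient (PP l)) / real (PP l)"
    unfolding totient_PP by (simp add: PP_def prod_dividef of_nat_prod)
  finally show ?thesis .
qed



definition CC :: "nat \<Rightarrow> nat \<Rightarrow> nat" where
  "CC l y = card {m\<in>{1..y}. coprime m (PP l)}"

lemma CC_add: "CC l (PP l + y) = CC l (PP l) + CC l y"
proof -
  let ?P = "PP l"
  have "{m\<in>{1..?P + y}. coprime m ?P} = {m\<in>{1..?P}. coprime m ?P} \<union> (\<lambda>m. m + ?P) ` {m\<in>{1..y}. coprime m ?P}"
  proof (rule equalityI)
    show "{m\<in>{1..?P + y}. coprime m ?P} \<subseteq> {m\<in>{1..?P}. coprime m ?P} \<union> (\<lambda>m. m + ?P) ` {m\<in>{1..y}. coprime m ?P}"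
    proof (rule subsetI)
      fix x assume x: "x \<in> {m\<in>{1..?P + y}. coprime m ?P}"
      show "x \<in> {m\<in>{1..?P}. coprime m ?P} \<union> (\<lambda>m. m + ?P) ` {m\<in>{1..y}. coprime m ?P}"
      proof (cases "x \<le> ?P")
        case True thus ?thesis using x by auto
      next
        case False
        have xe: "x - ?P + ?P = x" using False by simp
        have "coprime (x - ?P + ?P) ?P" unfolding xe using x by simp
        hence "coprime (x - ?P) ?P" by (metis coprime_iff_gcd_eq_1 gcd_add1)
        hence "x = (x - ?P) + ?P" "coprime (x - ?P) ?P" using xe by auto
        moreover have "x - ?P \<in> {1..y}" using x False by auto
        ultimately show ?thesis by blast
      qed
    qed
    show "{m\<in>{1..?P}. coprime m ?P} \<union> (\<lambda>m. m + ?P) ` {m\<in>{1..y}. coprime m ?P} \<subseteq> {m\<in>{1..?P + y}. coprime m ?P}"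
    proof (rule subsetI)
      fix x assume "x \<in> {m\<in>{1..?P}. coprime m ?P} \<union> (\<lambda>m. m + ?P) ` {m\<in>{1..y}. coprime m ?P}"
      thus "x \<in> {m\<in>{1..?P + y}. coprime m ?P}"
      proof
        assume "x \<in> {m\<in>{1..?P}. coprime m ?P}" thus ?thesis by simp
      next
        assume "x \<in> (\<lambda>m. m + ?P) ` {m\<in>{1..y}. coprime m ?P}"
        then obtain m where m: "m \<in> {1..y}" "coprime m ?P" "x = m + ?P" by blast
        have "coprime (m + ?P) ?P" using m(2) by (metis coprime_iff_gcd_eq_1 gcd_add1)
        thus ?thesis using m by simp
      qed
    qed
  qed
  moreover have "{m\<in>{1..?P}. coprime m ?P} \<inter> (\<lambda>m. m + ?P) ` {m\<in>{1..y}. coprime m ?P} = {}" by force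
  moreover have "inj_on (\<lambda>m. m + ?P) {m\<in>{1..y}. coprime m ?P}" by (auto intro: inj_onI)
  ultimately show ?thesis unfolding CC_def by (simp add: card_Un_disjoint card_image)
qed

lemma CC_mult: "CC l (q * PP l + r) = q * CC l (PP l) + CC l r"
proof (induction q)
  case 0 thus ?case by simp
next
  case (Suc q)
  have "Suc q * PP l + r = PP l + (q * PP l + r)" by simp
  thus ?case using Suc CC_add[of l "q*PP l + r"] by (simp add: add.assoc)
qed

lemma CC_le: "CC l y \<le> y"
proof -
  have "CC l y \<le> card {1..y}" unfolding CC_def by (intro card_mono) auto
  thus ?thesis by simp
qed

lemma CC_PP: "CC l (PP l) = totient (PP l)"
  unfolding CC_def totient_def totatives_def
  by (rule arg_cong[where f=card]) auto

definition dl :: "nat \<Rightarrow> real" where "dl l = (\<Prod>j=1..l. 1 - 1 / real (pr j))"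

lemma absb: "x = a - b \<Longrightarrow> a \<le> P \<Longrightarrow> 0 \<le> b \<Longrightarrow> b \<le> P \<Longrightarrow> 0 \<le> a \<Longrightarrow> \<bar>x\<bar> \<le> (P::real)"
  by linarith

lemma CC_approx: "\<bar>real (CC l y) - dl l * real y\<bar> \<le> real (PP l)"
proof -
  let ?P = "PP l"
  have P0: "real ?P > 0" using PP_pos by simp
  have y: "y = (y div ?P) * ?P + y mod ?P" by simp
  have "CC l y = (y div ?P) * totient ?P + CC l (y mod ?P)"
    using CC_mult[where q="y div ?P" and l=l and r="y mod ?P"] y CC_PP by metis
  moreover have "CC l (y mod ?P) \<le> ?P" using CC_le[of l "y mod ?P"] mod_less_eq_dividend
    by (meson PP_pos mod_less_divisor less_imp_le order_trans)
  moreover have "totient ?P \<le> ?P" by (rule totient_le)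
  moreover have "dl l * real y = real (y div ?P) * real (totient ?P) + real (y mod ?P) * real (totient ?P) / real ?P"
  proof -
    have "real y = real (y div ?P) * real ?P + real (y mod ?P)"
      by (metis of_nat_add of_nat_mult y)
    thus ?thesis unfolding dl_def delta_eq using P0 by (simp add: field_simps)
  qed
  moreover have "real (y mod ?P) * real (totient ?P) / real ?P \<le> real ?P"
  proof -
    have "real (y mod ?P) \<le> real ?P" using PP_pos by (simp add: less_imp_le)
    moreover have "real (totient ?P) / real ?P \<le> 1" using P0 \<open>totient ?P \<le> ?P\<close> by simp
    hence "real (y mod ?P) * (real (totient ?P) / real ?P) \<le> real (y mod ?P) * 1"
      by (intro mult_left_mono) auto
    thus ?thesis using \<open>real (y mod ?P) \<le> real ?P\<close> by simp
  qed
  moreover have "0 \<le> real (y mod ?P) * real (totient ?P) / real ?P" by simp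
  moreover have "real (CC l (y mod ?P)) \<le> real ?P" using \<open>CC l (y mod ?P) \<le> ?P\<close> by simp
  ultimately have "real (CC l y) - dl l * real y = real (CC l (y mod ?P)) - real (y mod ?P) * real (totient ?P) / real ?P"
    by simp
  from absb[OF this \<open>real (CC l (y mod ?P)) \<le> real ?P\<close>
     \<open>0 \<le> real (y mod ?P) * real (totient ?P) / real ?P\<close>
     \<open>real (y mod ?P) * real (totient ?P) / real ?P \<le> real ?P\<close>]
  show ?thesis by simp
qed



lemma odd_decomp_ex: "x > (0::nat) \<Longrightarrow> \<exists>k w. x = 2^k * w \<and> odd w"
proof (induction x rule: less_induct)
  case (less x)
  show ?case
  proof (cases "odd x")
    case True thus ?thesis by (rule_tac x=0 in exI) auto
  next
    case False
    then obtain y where y: "x = 2 * y" by (auto elim: evenE)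
    with less.prems have "y < x" "y > 0" by auto
    with less.IH obtain k w where "y = 2^k * w" "odd w" by blast
    with y show ?thesis by (rule_tac x="Suc k" in exI) auto
  qed
qed

lemma odd_decomp_uniq_aux:
  assumes "2^k * (o1::nat) = 2^j * o2" "odd o1" "odd o2" "k \<le> j"
  shows "k = j \<and> o1 = o2"
proof -
  have "(2::nat)^j = 2^k * 2^(j-k)" using assms(4) by (simp add: power_add[symmetric])
  hence "2^k * o1 = 2^k * (2^(j-k) * o2)" using assms(1) by simp
  hence e: "o1 = 2^(j-k) * o2" by simp
  show ?thesis
  proof (cases "j - k = 0")
    case True thus ?thesis using e assms(4) by simp
  next
    case False hence "even o1" unfolding e by simp
    with assms(2) show ?thesis by simp
  qed
qed

lemma odd_decomp_uniq:
  assumes "2^k * (o1::nat) = 2^j * o2" "odd o1" "odd o2"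
  shows "k = j \<and> o1 = o2"
  using odd_decomp_uniq_aux[OF assms] odd_decomp_uniq_aux[OF assms(1)[symmetric] assms(3) assms(2)]
  by (cases "k \<le> j") auto

definition op :: "nat \<Rightarrow> nat" where "op x = (SOME w. odd w \<and> (\<exists>k. x = 2^k * w))"

lemma op_spec: "x > 0 \<Longrightarrow> odd (op x) \<and> (\<exists>k. x = 2^k * op x)"
  unfolding op_def by (rule someI_ex) (use odd_decomp_ex in blast)

lemma op_eq: "odd w \<Longrightarrow> op (2^k * w) = w"
proof -
  assume w: "odd w"
  have "2^k * w > 0" using w by (cases "w = 0") auto
  from op_spec[OF this] obtain j where "odd (op (2^k*w))" "2^k * w = 2^j * op (2^k * w)" by blast
  thus ?thesis using odd_decomp_uniq[of k w j] w by metis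
qed

lemma op_dvd: "x > 0 \<Longrightarrow> op x dvd x"
  using op_spec[of x] by (metis dvd_triv_right)

lemma op_pos: "x > 0 \<Longrightarrow> op x > 0"
  using op_spec[of x] by (cases "op x") auto

lemma op_comp:
  assumes "x > 0" "y > 0" "op x = op y"
  shows "x dvd y \<or> y dvd x"
proof -
  obtain k where k: "x = 2^k * op x" using op_spec[OF assms(1)] by blast
  obtain j where j: "y = 2^j * op y" using op_spec[OF assms(2)] by blast
  show ?thesis
  proof (cases "k \<le> j")
    case True
    hence "x dvd y" using k j assms(3) by (metis le_imp_power_dvd mult_dvd_mono dvd_refl)
    thus ?thesis ..
  next
    case False
    hence "y dvd x" using k j assms(3) by (metis nat_le_linear le_imp_power_dvd mult_dvd_mono dvd_refl)
    thus ?thesis ..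
  qed
qed

lemma op_inj:
  assumes "primitive A" "0 \<notin> A"
  shows "inj_on op A"
proof (rule inj_onI)
  fix x y assume xy: "x \<in> A" "y \<in> A" "op x = op y"
  hence "x > 0" "y > 0" using assms(2) by (auto intro: gr0I)
  from op_comp[OF this xy(3)] show "x = y"
    using assms(1) xy unfolding primitive_def by metis
qed

lemma card_odds: "card {w\<in>{1..2*n}. odd (w::nat)} = n"
proof (induction n)
  case 0 show ?case by simp
next
  case (Suc n)
  have "{w\<in>{1..2*Suc n}. odd (w::nat)} = insert (2*n+1) {w\<in>{1..2*n}. odd w}"
  proof (rule equalityI; rule subsetI)
    fix x
    assume "x \<in> {w\<in>{1..2*Suc n}. odd (w::nat)}"
    hence "x \<ge> 1" "x \<le> 2*n+2" "odd x" by auto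
    moreover have "x \<noteq> 2*n+2" using \<open>odd x\<close> by auto
    ultimately show "x \<in> insert (2*n+1) {w\<in>{1..2*n}. odd w}" by auto
  next
    fix x assume "x \<in> insert (2*n+1) {w\<in>{1..2*n}. odd w}"
    thus "x \<in> {w\<in>{1..2*Suc n}. odd (w::nat)}" by auto
  qed
  thus ?case using Suc by simp
qed



lemma Ml_finite: "finite (Ml l i)"
  by (rule finite_subset[of _ "{1..i}"]) (auto simp: Ml_def)

lemma Ml_sub: "Ml l i \<subseteq> {1..i}"
  by (auto simp: Ml_def)

definition MA :: "nat \<Rightarrow> nat \<Rightarrow> nat set set" where
  "MA l i = {B. B \<subseteq> Ml l i \<and> primitive B \<and> card B = width l i}"

lemma rl_MA: "rl l i = card (MA l i)"
  unfolding rl_def MA_def by simp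

lemma width_set_finite: "finite {card A | A. A \<subseteq> Ml l i \<and> primitive A}"
proof -
  have "{card A | A. A \<subseteq> Ml l i \<and> primitive A} \<subseteq> card ` Pow (Ml l i)" by auto
  thus ?thesis using Ml_finite by (meson finite_Pow_iff finite_imageI finite_subset)
qed

lemma width_ge: "B \<subseteq> Ml l i \<Longrightarrow> primitive B \<Longrightarrow> card B \<le> width l i"
  unfolding width_def by (rule Max_ge[OF width_set_finite]) auto

lemma width_attained: "\<exists>B. B \<subseteq> Ml l i \<and> primitive B \<and> card B = width l i"
proof -
  have "{} \<subseteq> Ml l i \<and> primitive {}" by (auto simp: primitive_def)
  hence ne: "{card A | A. A \<subseteq> Ml l i \<and> primitive A} \<noteq> {}" by blast
  have "width l i \<in> {card A | A. A \<subseteq> Ml l i \<and> primitive A}"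
    unfolding width_def by (rule Max_in[OF width_set_finite ne])
  thus ?thesis by auto
qed

lemma rl_pos: "rl l i \<ge> 1"
proof -
  have "finite (MA l i)" unfolding MA_def
    by (rule finite_subset[of _ "Pow (Ml l i)"]) (auto simp: Ml_finite)
  moreover have "MA l i \<noteq> {}" using width_attained unfolding MA_def by blast
  ultimately show ?thesis unfolding rl_MA by (simp add: Suc_le_eq card_gt_0_iff)
qed

lemma op_Ml: assumes "b \<in> Ml l i" shows "op b \<in> Ml l i"
proof -
  have b: "b \<ge> 1" "b \<le> i" "\<forall>q. prime q \<and> q dvd b \<longrightarrow> q \<in> pr ` {1..l}" using assms by (auto simp: Ml_def)
  have "op b dvd b" using op_dvd b by simp
  moreover have "op b > 0" using op_pos b by simp
  ultimately have "op b \<le> b" using b by (simp add: dvd_imp_le)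
  thus ?thesis using b \<open>op b > 0\<close> \<open>op b dvd b\<close> unfolding Ml_def by (auto intro: dvd_trans)
qed

lemma width_le_odd:
  assumes "B \<subseteq> Ml l i" "primitive B"
  shows "card B \<le> card {q\<in>Ml l i. odd q}"
proof -
  have "0 \<notin> B" using assms(1) by (auto simp: Ml_def)
  hence "inj_on op B" using op_inj assms(2) by blast
  hence "card B = card (op ` B)" by (simp add: card_image)
  also have "\<dots> \<le> card {q\<in>Ml l i. odd q}"
  proof (rule card_mono)
    show "finite {q\<in>Ml l i. odd q}" using Ml_finite by simp
    show "op ` B \<subseteq> {q\<in>Ml l i. odd q}"
    proof
      fix x assume "x \<in> op ` B"
      then obtain b where b: "b \<in> B" "x = op b" by blast
      have "b > 0" using b(1) \<open>0 \<notin> B\<close> by (cases b) auto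
      thus "x \<in> {q\<in>Ml l i. odd q}" using op_Ml[of b l i] op_spec[of b] b assms(1) by auto
    qed
  qed
  finally show ?thesis .
qed

lemma width_le_odd': "width l i \<le> card {q\<in>Ml l i. odd q}"
  using width_attained[of l i] width_le_odd by metis



lemma opA:
  assumes A: "A \<subseteq> {1..2*n}" "card A = n" "primitive A"
  shows "op ` A = {w\<in>{1..2*n}. odd w}"
proof (rule card_subset_eq)
  show "finite {w\<in>{1..2*n}. odd w}" by simp
  show "op ` A \<subseteq> {w\<in>{1..2*n}. odd w}"
  proof
    fix x assume "x \<in> op ` A"
    then obtain a where a: "a \<in> A" "x = op a" by blast
    have "a > 0" "a \<le> 2*n" using a A by auto
    moreover have "op a dvd a" "op a > 0" "odd (op a)" using op_dvd op_pos op_spec \<open>a > 0\<close> by auto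
    ultimately show "x \<in> {w\<in>{1..2*n}. odd w}" using a dvd_imp_le[of "op a" a] by auto
  qed
  have "0 \<notin> A" using A by auto
  hence "inj_on op A" using op_inj A by blast
  hence "card (op ` A) = n" using A by (simp add: card_image)
  thus "card (op ` A) = card {w\<in>{1..2*n}. odd w}" using card_odds[of n] by simp
qed

lemma good_odd: assumes "l \<ge> 1" "coprime m (PP l)" shows "odd m"
proof -
  have "coprime m (pr 1)" using assms coprime_PP[of m l] by auto
  thus ?thesis using pr_1 coprime_right_2_iff_odd by metis
qed

lemma key:
  assumes A: "A \<subseteq> {1..2*n}" "card A = n" "primitive A"
    and l: "l \<ge> 1" and m: "coprime m (PP l)" "m \<ge> 1" and i: "2*n div m = i"
  shows "(\<lambda>a. a div m) ` (A \<inter> (\<lambda>s. m* s) ` Ml l i) \<in> MA l i"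
proof -
  let ?D = "(\<lambda>a. a div m) ` (A \<inter> (\<lambda>s. m* s) ` Ml l i)"
  have Dsub: "?D \<subseteq> Ml l i"
  proof
    fix x assume "x \<in> ?D"
    then obtain s where "s \<in> Ml l i" "x = (m* s) div m" by blast
    thus "x \<in> Ml l i" using m by simp
  qed
  have Dprim: "primitive ?D"
    unfolding primitive_def
  proof (intro ballI impI)
    fix x y assume "x \<in> ?D" "y \<in> ?D" "x dvd y"
    then obtain s t where st: "s \<in> Ml l i" "m* s \<in> A" "x = (m* s) div m" "t \<in> Ml l i" "m*t \<in> A" "y = (m*t) div m"
      by blast
    hence "x = s" "y = t" using m by auto
    hence "m* s dvd m*t" using \<open>x dvd y\<close> by simp
    hence "m* s = m*t" using A(3) st unfolding primitive_def by blast
    thus "x = y" using m \<open>x = s\<close> \<open>y = t\<close> by simp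
  qed
  have Dfin: "finite ?D" using Dsub Ml_finite finite_subset by blast
  have modd: "odd m" using good_odd l m by blast
  have "{q\<in>Ml l i. odd q} \<subseteq> op ` ?D"
  proof
    fix q assume q: "q \<in> {q\<in>Ml l i. odd q}"
    hence q1: "q \<ge> 1" "q \<le> i" "odd q" "\<forall>p. prime p \<and> p dvd q \<longrightarrow> p \<in> pr ` {1..l}"
      by (auto simp: Ml_def)
    have "m * q \<le> m * i" using q1 by simp
    also have "m * i \<le> 2*n" using i by (metis div_times_less_eq_dividend mult.commute)
    finally have "m*q \<in> {w\<in>{1..2*n}. odd w}" using q1 modd m by simp
    hence "m*q \<in> op ` A" using opA[OF A] by simp
    then obtain a where a: "a \<in> A" "op a = m*q" by force
    have "a > 0" using a A by auto
    then obtain k where k: "a = 2^k * (m*q)" using op_spec[of a] a by metis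
    define s where "s = 2^k * q"
    have as: "a = m * s" unfolding s_def k by simp
    have "m * s \<le> 2*n" using a A as by auto
    hence "s \<le> i" unfolding i[symmetric] using m by (simp add: less_eq_div_iff_mult_less_eq mult.commute)
    moreover have "s \<ge> 1" unfolding s_def using q1 by simp
    moreover have "\<forall>p. prime p \<and> p dvd s \<longrightarrow> p \<in> pr ` {1..l}"
    proof (intro allI impI)
      fix p assume p: "prime p \<and> p dvd s"
      hence "p dvd 2^k \<or> p dvd q" unfolding s_def using prime_dvd_mult_iff by blast
      thus "p \<in> pr ` {1..l}"
      proof
        assume "p dvd 2^k"
        hence "p dvd 2" using p prime_dvd_power by blast
        hence "p = 2" using p by (metis primes_dvd_imp_eq two_is_prime_nat)
        thus ?thesis using l pr_1 by force
      next
        assume "p dvd q" thus ?thesis using q1 p by blast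
      qed
    qed
    ultimately have sM: "s \<in> Ml l i" unfolding Ml_def by blast
    have "s \<in> ?D" using sM a as m by force
    moreover have "op s = q" unfolding s_def using op_eq q1 by blast
    ultimately show "q \<in> op ` ?D" by force
  qed
  hence "card {q\<in>Ml l i. odd q} \<le> card (op ` ?D)" using Dfin by (simp add: card_mono)
  also have "\<dots> \<le> card ?D" using Dfin card_image_le by blast
  finally have "card {q\<in>Ml l i. odd q} \<le> card ?D" .
  moreover have "card ?D \<le> width l i" using width_ge Dsub Dprim by blast
  moreover have "width l i \<le> card {q\<in>Ml l i. odd q}" by (rule width_le_odd')
  ultimately have "card ?D = width l i" by linarith
  thus ?thesis unfolding MA_def using Dsub Dprim by blast
qed



lemma coprime_Ml:
  assumes "coprime m (PP l)" "s \<in> Ml l x"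
  shows "coprime m s"
proof (rule ccontr)
  assume nc: "\<not> coprime m s"
  hence "gcd m s \<noteq> 1" using coprime_iff_gcd_eq_1 by blast
  then obtain p where p: "prime p" "p dvd gcd m s" using prime_factor_nat by blast
  hence pm: "p dvd m" and ps: "p dvd s" by auto
  hence "p \<in> pr ` {1..l}" using assms(2) p(1) unfolding Ml_def by blast
  then obtain j where j: "j \<in> {1..l}" "p = pr j" by blast
  have "p dvd PP l" unfolding PP_def j(2) using j(1) by (intro dvd_prodI) auto
  hence "p dvd gcd m (PP l)" using pm by simp
  hence "p dvd 1" using assms(1) coprime_iff_gcd_eq_1 by metis
  thus False using p(1) by simp
qed

lemma cl_disj:
  assumes "coprime m1 (PP l)" "coprime m2 (PP l)" "s1 \<in> Ml l x1" "s2 \<in> Ml l x2"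
    "m1 * s1 = m2 * s2"
  shows "m1 = m2"
proof -
  have "m1 dvd m2 * s2" using assms(5) by (metis dvd_triv_left)
  moreover have "coprime m1 s2" using coprime_Ml assms by blast
  ultimately have d1: "m1 dvd m2" by (simp add: coprime_dvd_mult_left_iff)
  have "m2 dvd m1 * s1" using assms(5) by (metis dvd_triv_left)
  moreover have "coprime m2 s1" using coprime_Ml assms by blast
  ultimately have d2: "m2 dvd m1" by (simp add: coprime_dvd_mult_left_iff)
  from d1 d2 show ?thesis by (rule dvd_antisym)
qed

definition Sset :: "nat \<Rightarrow> nat \<Rightarrow> nat \<Rightarrow> nat set" where
  "Sset l n i = {m\<in>{1..2*n}. coprime m (PP l) \<and> 2*n div m = i}"

lemma Sset_eq:
  assumes "i \<ge> 1"
  shows "Sset l n i = {m\<in>{1..2*n div i}. coprime m (PP l)} - {m\<in>{1..2*n div (i+1)}. coprime m (PP l)}"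
proof (rule equalityI; rule subsetI)
  fix m assume "m \<in> Sset l n i"
  hence m: "m \<ge> 1" "m \<le> 2*n" "coprime m (PP l)" "2*n div m = i" unfolding Sset_def by auto
  have "i * m \<le> 2*n" using m(4) by (metis div_times_less_eq_dividend)
  hence "m \<le> 2*n div i" using assms by (simp add: less_eq_div_iff_mult_less_eq mult.commute)
  moreover have "\<not> m \<le> 2*n div (i+1)"
  proof
    assume "m \<le> 2*n div (i+1)"
    hence "m * (i+1) \<le> 2*n" by (simp add: less_eq_div_iff_mult_less_eq)
    hence "i + 1 \<le> 2*n div m" using m(1) by (simp add: less_eq_div_iff_mult_less_eq algebra_simps)
    thus False using m(4) by simp
  qed
  ultimately show "m \<in> {m\<in>{1..2*n div i}. coprime m (PP l)} - {m\<in>{1..2*n div (i+1)}. coprime m (PP l)}"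
    using m by auto
next
  fix m assume "m \<in> {m\<in>{1..2*n div i}. coprime m (PP l)} - {m\<in>{1..2*n div (i+1)}. coprime m (PP l)}"
  hence m: "m \<ge> 1" "m \<le> 2*n div i" "coprime m (PP l)" "\<not> m \<le> 2*n div (i+1)" by auto
  have "m * i \<le> 2*n" using m(2) assms by (simp add: less_eq_div_iff_mult_less_eq)
  hence a: "i \<le> 2*n div m" using m(1) by (simp add: less_eq_div_iff_mult_less_eq mult.commute)
  have "\<not> (i+1) \<le> 2*n div m"
  proof
    assume "(i+1) \<le> 2*n div m"
    hence "(i+1) * m \<le> 2*n" using m(1) by (simp add: less_eq_div_iff_mult_less_eq)
    hence "m \<le> 2*n div (i+1)" by (simp add: less_eq_div_iff_mult_less_eq mult.commute)
    thus False using m(4) by simp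
  qed
  hence "2*n div m = i" using a by simp
  moreover have "m \<le> 2*n" using m(2) div_le_dividend order_trans by blast
  ultimately show "m \<in> Sset l n i" unfolding Sset_def using m by auto
qed

lemma card_Sset:
  assumes "i \<ge> 1"
  shows "card (Sset l n i) = CC l (2*n div i) - CC l (2*n div (i+1))"
proof -
  have "{m\<in>{1..2*n div (i+1)}. coprime m (PP l)} \<subseteq> {m\<in>{1..2*n div i}. coprime m (PP l)}"
    using div_le_mono2[of i "i+1" "2*n"] assms by auto
  thus ?thesis unfolding Sset_eq[OF assms] CC_def by (simp add: card_Diff_subset)
qed



lemma fprim_bound:
  assumes n: "n \<ge> 1" and l: "l \<ge> 1" and K: "K \<ge> 1"
  shows "fprim n \<le> (\<Prod>i=1..K. rl l i ^ card (Sset l n i)) * 2 ^ (2*n - (\<Sum>i=1..K. card (Sset l n i) * card (Ml l i)))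
       \<and> (\<Sum>i=1..K. card (Sset l n i) * card (Ml l i)) \<le> 2*n"
proof -
  define G where "G = {m\<in>{1..2*n}. coprime m (PP l) \<and> 2*n div m \<in> {1..K}}"
  define cl where "cl m = (\<lambda>s. m * s) ` Ml l (2*n div m)" for m
  define U where "U = (\<Union>m\<in>G. cl m)"
  define F where "F = {A. A \<subseteq> {1..2*n} \<and> card A = n \<and> primitive A}"
  have Gfin: "finite G" unfolding G_def by simp
  have clsub: "cl m \<subseteq> {1..2*n}" if "m \<in> G" for m
  proof
    fix x assume "x \<in> cl m"
    then obtain s where s: "s \<in> Ml l (2*n div m)" "x = m * s" unfolding cl_def by blast
    have m1: "m \<ge> 1" using that unfolding G_def by auto
    have "s \<ge> 1" "s \<le> 2*n div m" using s unfolding Ml_def by auto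
    hence "s * m \<le> 2*n" using m1 by (simp add: less_eq_div_iff_mult_less_eq)
    moreover have "m * s \<ge> 1" using m1 \<open>s \<ge> 1\<close> by simp
    ultimately show "x \<in> {1..2*n}" using s by (simp add: mult.commute)
  qed
  have clfin: "finite (cl m)" for m unfolding cl_def using Ml_finite by simp
  have cldisj: "cl m1 \<inter> cl m2 = {}" if "m1 \<in> G" "m2 \<in> G" "m1 \<noteq> m2" for m1 m2
  proof (rule ccontr)
    assume "cl m1 \<inter> cl m2 \<noteq> {}"
    then obtain s1 s2 where "s1 \<in> Ml l (2*n div m1)" "s2 \<in> Ml l (2*n div m2)" "m1 * s1 = m2 * s2"
      unfolding cl_def by auto
    moreover have "coprime m1 (PP l)" "coprime m2 (PP l)" using that unfolding G_def by auto
    ultimately have "m1 = m2" using cl_disj by blast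
    thus False using that by simp
  qed
  have Usub: "U \<subseteq> {1..2*n}" unfolding U_def using clsub by blast
  have Ufin: "finite U" using Usub finite_subset by blast
  have cardcl: "card (cl m) = card (Ml l (2*n div m))" if "m \<in> G" for m
  proof -
    have "m \<ge> 1" using that unfolding G_def by auto
    hence "inj_on (\<lambda>s. m * s) (Ml l (2*n div m))" by (auto intro: inj_onI)
    thus ?thesis unfolding cl_def by (simp add: card_image)
  qed
  have cardU: "card U = (\<Sum>m\<in>G. card (Ml l (2*n div m)))"
  proof -
    have "card U = (\<Sum>m\<in>G. card (cl m))" unfolding U_def
      by (rule card_UN_disjoint) (use Gfin clfin cldisj in auto)
    also have "\<dots> = (\<Sum>m\<in>G. card (Ml l (2*n div m)))" using cardcl by simp
    finally show ?thesis .
  qed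
  have GS: "{m\<in>G. 2*n div m = i} = Sset l n i" if "i \<in> {1..K}" for i
    using that unfolding G_def Sset_def by auto
  have Gimg: "(\<lambda>m. 2*n div m) ` G \<subseteq> {1..K}" unfolding G_def by auto
  have sumeq: "(\<Sum>m\<in>G. card (Ml l (2*n div m))) = (\<Sum>i=1..K. card (Sset l n i) * card (Ml l i))"
  proof -
    have "(\<Sum>m\<in>G. card (Ml l (2*n div m))) = (\<Sum>i\<in>{1..K}. \<Sum>m\<in>{m\<in>G. 2*n div m = i}. card (Ml l (2*n div m)))"
      by (rule sum.group[symmetric]) (use Gfin Gimg in auto)
    also have "\<dots> = (\<Sum>i=1..K. card (Sset l n i) * card (Ml l i))"
    proof (rule sum.cong)
      fix i assume i: "i \<in> {1..K}"
      have "(\<Sum>m\<in>{m\<in>G. 2*n div m = i}. card (Ml l (2*n div m))) = (\<Sum>m\<in>{m\<in>G. 2*n div m = i}. card (Ml l i))"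
        by (rule sum.cong) auto
      also have "\<dots> = card (Sset l n i) * card (Ml l i)" using GS[OF i] by simp
      finally show "(\<Sum>m\<in>{m\<in>G. 2*n div m = i}. card (Ml l (2*n div m))) = card (Sset l n i) * card (Ml l i)" .
    qed simp
    finally show ?thesis .
  qed
  have prodeq: "(\<Prod>m\<in>G. rl l (2*n div m)) = (\<Prod>i=1..K. rl l i ^ card (Sset l n i))"
  proof -
    have "(\<Prod>m\<in>G. rl l (2*n div m)) = (\<Prod>i\<in>{1..K}. \<Prod>m\<in>{m\<in>G. 2*n div m = i}. rl l (2*n div m))"
      by (rule prod.group[symmetric]) (use Gfin Gimg in auto)
    also have "\<dots> = (\<Prod>i=1..K. rl l i ^ card (Sset l n i))"
    proof (rule prod.cong)
      fix i assume i: "i \<in> {1..K}"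
      have "(\<Prod>m\<in>{m\<in>G. 2*n div m = i}. rl l (2*n div m)) = (\<Prod>m\<in>{m\<in>G. 2*n div m = i}. rl l i)"
        by (rule prod.cong) auto
      also have "\<dots> = rl l i ^ card (Sset l n i)" using GS[OF i] by simp
      finally show "(\<Prod>m\<in>{m\<in>G. 2*n div m = i}. rl l (2*n div m)) = rl l i ^ card (Sset l n i)" .
    qed simp
    finally show ?thesis .
  qed
  define \<phi> where "\<phi> A = (restrict (\<lambda>m. (\<lambda>a. a div m) ` (A \<inter> cl m)) G, A - U)" for A
  define T where "T = PiE G (\<lambda>m. MA l (2*n div m)) \<times> Pow ({1..2*n} - U)"
  have MAfin: "finite (MA l i)" for i unfolding MA_def
    by (rule finite_subset[of _ "Pow (Ml l i)"]) (auto simp: Ml_finite)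
  have Tfin: "finite T" unfolding T_def using Gfin MAfin by (intro finite_cartesian_product finite_PiE) auto
  have cardT: "card T = (\<Prod>m\<in>G. rl l (2*n div m)) * 2 ^ (2*n - card U)"
  proof -
    have "card ({1..2*n} - U) = 2*n - card U" using Usub Ufin by (simp add: card_Diff_subset)
    thus ?thesis unfolding T_def card_cartesian_product using Gfin
      by (simp add: card_PiE card_Pow rl_MA)
  qed
  have phiT: "\<phi> ` F \<subseteq> T"
  proof
    fix y assume "y \<in> \<phi> ` F"
    then obtain A where A: "A \<in> F" "y = \<phi> A" by blast
    have "restrict (\<lambda>m. (\<lambda>a. a div m) ` (A \<inter> cl m)) G \<in> PiE G (\<lambda>m. MA l (2*n div m))"
    proof (rule restrict_PiE_iff[THEN iffD2], intro ballI)
      fix m assume m: "m \<in> G"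
      show "(\<lambda>a. a div m) ` (A \<inter> cl m) \<in> MA l (2*n div m)"
        unfolding cl_def
        by (rule key) (use A(1) m l in \<open>auto simp: F_def G_def\<close>)
    qed
    moreover have "A - U \<in> Pow ({1..2*n} - U)" using A(1) unfolding F_def by auto
    ultimately show "y \<in> T" unfolding A(2) \<phi>_def T_def by simp
  qed
  have sub: "A \<subseteq> B" if AB: "A \<in> F" "B \<in> F" "\<phi> A = \<phi> B" for A B
  proof
    fix x assume x: "x \<in> A"
    show "x \<in> B"
    proof (cases "x \<in> U")
      case False
      have "A - U = B - U" using AB(3) unfolding \<phi>_def by simp
      thus ?thesis using x False by blast
    next
      case True
      then obtain m where m: "m \<in> G" "x \<in> cl m" unfolding U_def by blast
      then obtain s where s: "s \<in> Ml l (2*n div m)" "x = m * s" unfolding cl_def by blast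
      have m1: "m \<ge> 1" using m unfolding G_def by auto
      have "restrict (\<lambda>m. (\<lambda>a. a div m) ` (A \<inter> cl m)) G m = restrict (\<lambda>m. (\<lambda>a. a div m) ` (B \<inter> cl m)) G m"
        using AB(3) unfolding \<phi>_def by simp
      hence eq: "(\<lambda>a. a div m) ` (A \<inter> cl m) = (\<lambda>a. a div m) ` (B \<inter> cl m)" using m(1) by simp
      have "s \<in> (\<lambda>a. a div m) ` (A \<inter> cl m)" using x m s m1 by force
      then obtain b where b: "b \<in> B" "b \<in> cl m" "b div m = s" unfolding eq by blast
      then obtain t where "b = m * t" unfolding cl_def by blast
      hence "b = x" using b(3) s(2) m1 by simp
      thus ?thesis using b by simp
    qed
  qed
  have "inj_on \<phi> F"
  proof (rule inj_onI)
    fix A B assume "A \<in> F" "B \<in> F" "\<phi> A = \<phi> B"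
    thus "A = B" using sub by (simp add: subset_antisym)
  qed
  hence "card F \<le> card T" using phiT Tfin by (rule card_inj_on_le)
  moreover have "fprim n = card F" unfolding fprim_def F_def by simp
  moreover have "card U \<le> 2*n" using Usub card_mono[OF _ Usub] by simp
  ultimately show ?thesis using cardT cardU sumeq prodeq by simp
qed



lemma lim_bound:
  fixes x :: "nat \<Rightarrow> real"
  assumes "\<And>n. \<bar>x n - a * real n\<bar> \<le> B"
  shows "(\<lambda>n. x n / real n) \<longlonglongrightarrow> a"
proof -
  have "(\<lambda>n. x n / real n - a) \<longlonglongrightarrow> 0"
  proof (rule Lim_null_comparison)
    show "eventually (\<lambda>n. norm (x n / real n - a) \<le> B / real n) sequentially"
      using eventually_ge_at_top[of 1]
    proof eventually_elim
      case (elim n)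
      hence np: "real n > 0" by simp
      have "x n / real n - a = (x n - a * real n) / real n" using np by (simp add: field_simps)
      hence "norm (x n / real n - a) = \<bar>x n - a * real n\<bar> / real n" using np by simp
      also have "\<dots> \<le> B / real n" using assms[of n] np by (simp add: divide_right_mono)
      finally show ?case .
    qed
    show "(\<lambda>n. B / real n) \<longlonglongrightarrow> 0" by (rule lim_const_over_n)
  qed
  hence "(\<lambda>n. (x n / real n - a) + a) \<longlonglongrightarrow> 0 + a" by (intro tendsto_add) auto
  thus ?thesis by simp
qed

lemma dl_bounds: "0 \<le> dl l \<and> dl l \<le> 1"
proof -
  have f: "0 \<le> 1 - 1 / real (pr j) \<and> 1 - 1 / real (pr j) \<le> 1" for j
  proof -
    have "real (pr j) \<ge> 2" using pr_prime[of j] prime_ge_2_nat by simp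
    thus ?thesis by (simp add: field_simps)
  qed
  show ?thesis unfolding dl_def using f by (auto intro: prod_nonneg prod_le_1)
qed

lemma div_approx: assumes "i \<ge> (1::nat)" shows "\<bar>real (N div i) - real N / real i\<bar> \<le> 1"
proof -
  have "N = i * (N div i) + N mod i" by simp
  hence "real N = real i * real (N div i) + real (N mod i)" by (metis of_nat_add of_nat_mult)
  moreover have "real (N mod i) < real i" using assms by simp
  moreover have "real i > 0" using assms by simp
  ultimately have "real N / real i = real (N div i) + real (N mod i) / real i"
    by (simp add: field_simps)
  moreover have "real (N mod i) / real i < 1" using \<open>real (N mod i) < real i\<close> \<open>real i > 0\<close> by simp
  moreover have "real (N mod i) / real i \<ge> 0" by simp
  ultimately show ?thesis by linarith
qed

lemma CC_approx2:
  assumes "i \<ge> 1"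
  shows "\<bar>real (CC l (2*n div i)) - dl l * (2 * real n / real i)\<bar> \<le> real (PP l) + 1"
proof -
  have a: "\<bar>real (CC l (2*n div i)) - dl l * real (2*n div i)\<bar> \<le> real (PP l)" by (rule CC_approx)
  have b: "\<bar>real (2*n div i) - real (2*n) / real i\<bar> \<le> 1" by (rule div_approx[OF assms])
  have "dl l * real (2*n div i) - dl l * (real (2*n) / real i) = dl l * (real (2*n div i) - real (2*n) / real i)"
    by (simp only: right_diff_distrib)
  hence "\<bar>dl l * real (2*n div i) - dl l * (real (2*n) / real i)\<bar> = \<bar>dl l\<bar> * \<bar>real (2*n div i) - real (2*n) / real i\<bar>"
    by (simp only: abs_mult)
  hence "\<bar>dl l * real (2*n div i) - dl l * (real (2*n) / real i)\<bar> = dl l * \<bar>real (2*n div i) - real (2*n) / real i\<bar>"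
    using dl_bounds[of l] by simp
  also have "\<dots> \<le> 1 * 1" using dl_bounds[of l] b by (intro mult_mono) auto
  finally have c: "\<bar>dl l * real (2*n div i) - dl l * (real (2*n) / real i)\<bar> \<le> 1" by simp
  have "real (2*n) = 2 * real n" by simp
  thus ?thesis using a c by linarith
qed

lemma CC_mono: "y \<le> y' \<Longrightarrow> CC l y \<le> CC l y'"
  unfolding CC_def by (intro card_mono) auto

lemma abs2: "\<bar>a - x\<bar> \<le> E \<Longrightarrow> \<bar>b - y\<bar> \<le> E \<Longrightarrow> s = a - b \<Longrightarrow> t = x - y \<Longrightarrow> \<bar>s - t\<bar> \<le> 2 * (E::real)"
  by linarith

lemma Sset_lim:
  assumes "i \<ge> 1"
  shows "(\<lambda>n. real (card (Sset l n i)) / real n) \<longlonglongrightarrow> 2 / (real i * (real i + 1)) * dl l"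
proof (rule lim_bound)
  fix n
  have le: "CC l (2*n div (i+1)) \<le> CC l (2*n div i)" using assms by (intro CC_mono div_le_mono2) auto
  have s: "real (card (Sset l n i)) = real (CC l (2*n div i)) - real (CC l (2*n div (i+1)))"
    using card_Sset[OF assms] le by simp
  have e1: "\<bar>real (CC l (2*n div i)) - dl l * (2 * real n / real i)\<bar> \<le> real (PP l) + 1"
    by (rule CC_approx2[OF assms])
  have e2: "\<bar>real (CC l (2*n div (i+1))) - dl l * (2 * real n / real (i+1))\<bar> \<le> real (PP l) + 1"
    by (rule CC_approx2) simp
  have "2 / (real i * (real i + 1)) * dl l * real n = dl l * (2 * real n / real i) - dl l * (2 * real n / real (i+1))"
    using assms by (simp add: field_simps)
  thus "\<bar>real (card (Sset l n i)) - 2 / (real i * (real i + 1)) * dl l * real n\<bar> \<le> 2 * (real (PP l) + 1)"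
    using abs2[OF e1 e2 s] by metis
qed



theorem mainTheorem8:
  fixes l K :: nat
  assumes "l \<ge> 1" and "K \<ge> 1"
  shows "limsup (\<lambda>n. ereal (real (fprim n) powr (1 / real n)))
           \<le> ereal (cLK l K * 2 powr etaLK l K)"
proof -
  let ?s = "\<lambda>n i. real (card (Sset l n i)) / real n"
  let ?a = "\<lambda>i. 2 / (real i * (real i + 1)) * (\<Prod>j=1..l. 1 - 1 / real (pr j))"
  define g where "g n = (\<Prod>i=1..K. real (rl l i) powr ?s n i) *
      2 powr (2 - (\<Sum>i=1..K. ?s n i * real (card (Ml l i))))" for n
  have rpos: "real (rl l i) > 0" for i using rl_pos[of l i] by simp
  have glim: "g \<longlonglongrightarrow> cLK l K * 2 powr etaLK l K"
  proof -
    have si: "(\<lambda>n. ?s n i) \<longlonglongrightarrow> ?a i" if "i \<in> {1..K}" for i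
      using Sset_lim[of i l] that unfolding dl_def by auto
    have "(\<lambda>n. \<Prod>i=1..K. real (rl l i) powr ?s n i) \<longlonglongrightarrow> (\<Prod>i=1..K. real (rl l i) powr ?a i)"
      by (intro tendsto_prod tendsto_powr tendsto_const si) (use rpos in \<open>auto simp: less_imp_neq[symmetric]\<close>)
    moreover have "(\<lambda>n. 2 powr (2 - (\<Sum>i=1..K. ?s n i * real (card (Ml l i))))) \<longlonglongrightarrow>
        2 powr (2 - (\<Sum>i=1..K. ?a i * real (card (Ml l i))))"
      by (intro tendsto_powr tendsto_diff tendsto_sum tendsto_mult tendsto_const si) auto
    ultimately show ?thesis unfolding g_def cLK_def etaLK_def by (intro tendsto_mult)
  qed
  have bound: "real (fprim n) powr (1 / real n) \<le> g n" if n: "n \<ge> 1" for n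
  proof -
    define R where "R = (\<Sum>i=1..K. card (Sset l n i) * card (Ml l i))"
    define N where "N = (\<Prod>i=1..K. rl l i ^ card (Sset l n i)) * 2 ^ (2*n - R)"
    have fb: "fprim n \<le> N" and R2: "R \<le> 2*n"
      using fprim_bound[OF n assms(1) assms(2)] unfolding N_def R_def by auto
    have np: "real n > 0" using n by simp
    have gn: "0 \<le> g n" unfolding g_def by (intro mult_nonneg_nonneg prod_nonneg) auto
    have "real N powr (1 / real n) = g n"
    proof -
      have "real N = (\<Prod>i=1..K. real (rl l i) ^ card (Sset l n i)) * 2 ^ (2*n - R)"
        unfolding N_def by simp
      also have "\<dots> = (\<Prod>i=1..K. real (rl l i) powr real (card (Sset l n i))) * 2 powr real (2*n - R)"
        using rpos by (simp add: powr_realpow)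
      finally have "real N powr (1 / real n) =
          (\<Prod>i=1..K. (real (rl l i) powr real (card (Sset l n i))) powr (1 / real n)) * (2 powr real (2*n - R)) powr (1 / real n)"
        by (simp add: powr_mult prod_nonneg prod_powr_distrib)
      also have "\<dots> = (\<Prod>i=1..K. real (rl l i) powr ?s n i) * 2 powr (real (2*n - R) / real n)"
        by (simp add: powr_powr)
      also have "real (2*n - R) / real n = 2 - (\<Sum>i=1..K. ?s n i * real (card (Ml l i)))"
      proof -
        have "real (2*n - R) = 2 * real n - (\<Sum>i=1..K. real (card (Sset l n i)) * real (card (Ml l i)))"
          using R2 unfolding R_def by (simp add: of_nat_diff)
        moreover have "(\<Sum>i=1..K. ?s n i * real (card (Ml l i))) = (\<Sum>i=1..K. real (card (Sset l n i)) * real (card (Ml l i))) / real n"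
          by (simp add: sum_divide_distrib)
        ultimately show ?thesis using np by (simp add: diff_divide_distrib)
      qed
      finally show ?thesis unfolding g_def .
    qed
    moreover have "real (fprim n) powr (1 / real n) \<le> real N powr (1 / real n)"
      using fb by (intro powr_mono2) auto
    ultimately show ?thesis by simp
  qed
  have "limsup (\<lambda>n. ereal (real (fprim n) powr (1 / real n))) \<le> limsup (\<lambda>n. ereal (g n))"
  proof (rule Limsup_mono)
    show "\<forall>\<^sub>F n in sequentially. ereal (real (fprim n) powr (1 / real n)) \<le> ereal (g n)"
      using eventually_ge_at_top[of "1::nat"] by (rule eventually_mono) (use bound in simp)
  qed
  also have "limsup (\<lambda>n. ereal (g n)) = ereal (cLK l K * 2 powr etaLK l K)"
    by (rule lim_imp_Limsup) (auto intro: glim)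
  finally show ?thesis .
qed


end
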